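(* Let $n\ge3$ and $\pi\in\mathrm{Eq}(\mathsf{B}_n)$. If the variety $\mathbf{A}_n\{\mathsf{Id}(\pi)\}$ satisfies an identity $\mathbf{u}\approx\mathbf{v}$ with $\mathbf{u}\in\mathsf{B}_n$, then $\mathbf{v}\in\mathsf{B}_n$ and $(\mathbf{u},\mathbf{v})\in\pi$.
   Context: All varieties are varieties of monoids (signature: associative binary operation and identity constant $1$). Words are elements of the free monoid $X^*$ over a countably infinite set $X$ of variables; identities are pairs of words, and variables may be substituted by $1$. For a variety $\mathbf{V}$ and set $\Sigma$ of identities, $\mathbf{V}\Sigma$ is the subvariety of $\mathbf{V}$ defined by $\Sigma$. $\mathbf{O}$ is the variety defined by $xyt_1xt_2y \approx yxt_1xt_2y$, $xt_1xyt_2y \approx xt_1yxt_2y$, $xt_1yt_2xy \approx xt_1yt_2yx$. For $n\ge3$, $\mathtt{A}_n$ is $x^n t_1\cdots t_n \approx t_1x\,t_2x\cdots t_nx$, $\mathbf{A}_n=\mathbf{O}\{\mathtt{A}_n\}$, and $\mathsf{B}_n=\{x^{n-1-j}tx^{j}:0\le j\le n-1\}$ (with $x,t$ distinct variables). For a set $\mathsf{W}$ of words, $\mathrm{Eq}(\mathsf{W})$ is the lattice of equivalence relations on $\mathsf{W}$ and $\mathsf{Id}(\pi)=\{\mathbf{u}\approx\mathbf{v}:(\mathbf{u},\mathbf{v})\in\pi\}$. *)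

theory Defs
  imports Main
begin

text \<open>Variables are natural numbers; words are elements of the free monoid nat list
  (concatenation, identity = empty word). An identity is a pair of words.\<close>

type_synonym word = "nat list"
type_synonym identity = "word \<times> word"

text \<open>Substitution of words (possibly the empty word, i.e. 1) for variables.\<close>
definition subst :: "(nat \<Rightarrow> word) \<Rightarrow> word \<Rightarrow> word" where
  "subst \<sigma> w = concat (map \<sigma> w)"

text \<open>Equational logic for monoids: the identities holding in the variety defined by
  Sigma (by Birkhoff's completeness theorem, these are exactly the derivable ones).\<close>
inductive derivable :: "identity set \<Rightarrow> word \<Rightarrow> word \<Rightarrow> bool" for \<Sigma> where
  axiom: "(u, v) \<in> \<Sigma> \<Longrightarrow> derivable \<Sigma> (subst \<sigma> u) (subst \<sigma> v)"
| rfl: "derivable \<Sigma> u u"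
| symm: "derivable \<Sigma> u v \<Longrightarrow> derivable \<Sigma> v u"
| trns: "derivable \<Sigma> u v \<Longrightarrow> derivable \<Sigma> v w \<Longrightarrow> derivable \<Sigma> u w"
| ctxt: "derivable \<Sigma> u v \<Longrightarrow> derivable \<Sigma> (p @ u @ q) (p @ v @ q)"

definition satisfies :: "identity set \<Rightarrow> identity \<Rightarrow> bool" where
  "satisfies \<Sigma> e \<longleftrightarrow> derivable \<Sigma> (fst e) (snd e)"

text \<open>Variable names: x = 0, y = 1, t1 = 2, t2 = 3.\<close>
definition O_ids :: "identity set" where
  "O_ids = { ([0,1,2,0,3,1], [1,0,2,0,3,1]),
             ([0,2,0,1,3,1], [0,2,1,0,3,1]),
             ([0,2,1,3,0,1], [0,2,1,3,1,0]) }"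

text \<open>A_n : x^n t_1 ... t_n = t_1 x t_2 x ... t_n x, with x = 0 and t_i = i.\<close>
definition A_id :: "nat \<Rightarrow> identity" where
  "A_id n = (replicate n 0 @ [1..<n+1], concat (map (\<lambda>i. [i, 0]) [1..<n+1]))"

text \<open>B_n = { x^(n-1-j) t x^j : 0 <= j <= n-1 }, with x = 0 and t = 1.\<close>
definition B :: "nat \<Rightarrow> word set" where
  "B n = { replicate (n - 1 - j) 0 @ [1] @ replicate j 0 | j. j \<le> n - 1 }"

text \<open>Defining identities of A_n{Id(pi)}: those of O, A_n, and Id(pi) = pi.\<close>
definition A_pi_ids :: "nat \<Rightarrow> identity set \<Rightarrow> identity set" where
  "A_pi_ids n \<pi> = O_ids \<union> {A_id n} \<union> \<pi>"

end

theory Submission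
  imports Defs
begin

definition nz :: "word \<Rightarrow> nat" where "nz w = length (filter (\<lambda>c. c \<noteq> 0) w)"
definition zc :: "word \<Rightarrow> nat" where "zc w = length (filter (\<lambda>c. c = 0) w)"

lemma subst_append[simp]: "subst s (x @ y) = subst s x @ subst s y"
  by (simp add: subst_def)
lemma subst_Cons[simp]: "subst s (c # y) = s c @ subst s y"
  by (simp add: subst_def)
lemma subst_Nil[simp]: "subst s [] = []"
  by (simp add: subst_def)
lemma subst_rep[simp]: "subst s (replicate k c) = concat (replicate k (s c))"
  by (induct k) auto
lemma filt_concat_rep[simp]: "length (filter P (concat (replicate k w))) = k * length (filter P w)"
  by (induct k) auto

lemma lower: "length (filter P (subst s w)) \<ge> count_list w c * length (filter P (s c))"
  by (induct w) auto

lemma subst_drop0: "s 0 = [] \<Longrightarrow> subst s w = subst s (filter (\<lambda>c. c \<noteq> 0) w)"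
  by (induct w) auto

lemma nz0: "nz w = 0 \<Longrightarrow> w = replicate (length w) 0"
  unfolding nz_def by (induct w) (auto split: if_splits)

lemma len_nz_zc: "length w = nz w + zc w"
  unfolding nz_def zc_def by (induct w) auto

lemma subst_id01: "set w \<subseteq> {0,1} \<Longrightarrow> s 0 = [0] \<Longrightarrow> s 1 = [1] \<Longrightarrow> subst s w = w"
  by (induct w) auto

definition step :: "identity set \<Rightarrow> word \<Rightarrow> word \<Rightarrow> bool" where
  "step S a b \<longleftrightarrow> (\<exists>p q s l r. ((l,r) \<in> S \<or> (r,l) \<in> S) \<and> a = p @ subst s l @ q \<and> b = p @ subst s r @ q)"

lemma step_sym: "step S a b \<Longrightarrow> step S b a"
  unfolding step_def by blast

lemma steps_sym: "(step S)\<^sup>*\<^sup>* a b \<Longrightarrow> (step S)\<^sup>*\<^sup>* b a"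
proof (induction rule: rtranclp_induct)
  case base then show ?case by simp
next
  case (step y z)
  then show ?case by (meson converse_rtranclp_into_rtranclp step_sym)
qed

lemma step_ctxt: "step S a b \<Longrightarrow> step S (p @ a @ q) (p @ b @ q)"
  unfolding step_def
proof (elim exE conjE)
  fix p0 q0 s l r
  assume "(l, r) \<in> S \<or> (r, l) \<in> S" "a = p0 @ subst s l @ q0" "b = p0 @ subst s r @ q0"
  then show "\<exists>pa qa s l r. ((l, r) \<in> S \<or> (r, l) \<in> S) \<and> p @ a @ q = pa @ subst s l @ qa \<and> p @ b @ q = pa @ subst s r @ qa"
    by (rule_tac x="p @ p0" in exI, rule_tac x="q0 @ q" in exI) auto
qed

lemma steps_ctxt: "(step S)\<^sup>*\<^sup>* a b \<Longrightarrow> (step S)\<^sup>*\<^sup>* (p @ a @ q) (p @ b @ q)"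
proof (induction rule: rtranclp_induct)
  case base then show ?case by simp
next
  case (step y z)
  then show ?case by (meson rtranclp.rtrancl_into_rtrancl step_ctxt)
qed

lemma deriv_steps: "derivable S a b \<Longrightarrow> (step S)\<^sup>*\<^sup>* a b"
proof (induction rule: derivable.induct)
  case (axiom u v s)
  have "step S (subst s u) (subst s v)"
    unfolding step_def using axiom by (rule_tac x="[]" in exI, rule_tac x="[]" in exI) auto
  then show ?case by simp
next
  case (rfl u) then show ?case by simp
next
  case (symm u v) then show ?case using steps_sym by blast
next
  case (trns u v w) then show ?case by simp
next
  case (ctxt u v p q) then show ?case using steps_ctxt by blast
qed

lemma B_form: "w \<in> B n \<Longrightarrow> \<exists>j. j \<le> n - 1 \<and> w = replicate (n - 1 - j) 0 @ [1] @ replicate j 0"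
  unfolding B_def by blast

lemma B_props:
  assumes "w \<in> B n" "n \<ge> 1"
  shows "length w = n \<and> zc w = n - 1 \<and> nz w = 1 \<and> set w \<subseteq> {0,1} \<and> count_list w 0 = n - 1
     \<and> count_list w 1 = 1 \<and> filter (\<lambda>c. c \<noteq> 0) w = [1]"
proof -
  obtain j where j: "j \<le> n - 1" "w = replicate (n - 1 - j) 0 @ [1] @ replicate j 0"
    using B_form[OF assms(1)] by blast
  have c0: "count_list (replicate k (0::nat)) 0 = k" for k by (induct k) auto
  have c1: "count_list (replicate k (0::nat)) 1 = 0" for k by (induct k) auto
  show ?thesis using j assms(2) by (auto simp: zc_def nz_def c0 c1 filter_replicate)
qed

lemma subst_B:
  assumes "w \<in> B n" "n \<ge> 1"
  shows "nz (subst s w) = (n - 1) * nz (s 0) + nz (s 1) \<and> zc (subst s w) = (n - 1) * zc (s 0) + zc (s 1)"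
proof -
  obtain j where j: "j \<le> n - 1" "w = replicate (n - 1 - j) 0 @ [1] @ replicate j 0"
    using B_form[OF assms(1)] by blast
  have e: "(n - 1 - j) * x + j * x = (n - 1) * x" for x :: nat
  proof -
    have "(n - 1 - j) * x + j * x = (n - 1 - j + j) * x" by (simp add: add_mult_distrib)
    also have "n - 1 - j + j = n - 1" using j by simp
    finally show ?thesis by simp
  qed
  have e2: "(n - Suc j) * x + j * x = (n - Suc 0) * x" for x :: nat using e[of x] by simp
  show ?thesis using j assms(2) by (simp add: zc_def nz_def e2)
qed

lemma subst_B_const:
  assumes "w \<in> B n" "n \<ge> 1" "s 0 = [0]" "s 1 = []"
  shows "subst s w = replicate (n - 1) 0"
proof -
  obtain j where j: "j \<le> n - 1" "w = replicate (n - 1 - j) 0 @ [1] @ replicate j 0"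
    using B_form[OF assms(1)] by blast
  have "concat (replicate k [0::nat]) = replicate k 0" for k by (induct k) auto
  then show ?thesis using j assms by (simp add: replicate_add[symmetric])
qed

lemma O_eq:
  assumes "nz (s 0) = 0" "nz (s 1) = 0" "(l, r) \<in> O_ids \<or> (r, l) \<in> O_ids"
  shows "subst s l = subst s r"
proof -
  have e0: "s 0 = replicate (length (s 0)) 0" using nz0 assms(1) by blast
  have e1: "s 1 = replicate (length (s 1)) 0" using nz0 assms(2) by blast
  have comm: "s 0 @ s 1 = s 1 @ s 0"
    by (subst e0, subst e1, subst e0, subst e1) (simp add: replicate_add[symmetric] add.commute)
  have comm2: "s 0 @ s 1 @ X = s 1 @ s 0 @ X" for X by (metis append_assoc comm)
  show ?thesis using assms(3) unfolding O_ids_def by (auto simp: comm comm2 comm[unfolded One_nat_def] comm2[unfolded One_nat_def])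
qed

lemma gen_eq:
  assumes "count_list l 0 = k" "count_list r 0 = k" "k \<ge> 2"
    "filter (\<lambda>c. c \<noteq> 0) l = filter (\<lambda>c. c \<noteq> 0) r"
    "nz (subst s l) \<le> 1" "zc (subst s l) \<le> k - 1"
  shows "subst s l = subst s r"
proof -
  have "k * nz (s 0) \<le> 1" using lower[where P="\<lambda>c. c \<noteq> 0" and s=s and w=l and c=0] assms unfolding nz_def by simp
  then have a: "nz (s 0) = 0" using assms(3)
    by (cases "nz (s 0)") auto
  have "k * zc (s 0) \<le> k - 1" using lower[where P="\<lambda>c. c = 0" and s=s and w=l and c=0] assms unfolding zc_def by simp
  then have b: "zc (s 0) = 0" using assms(3)
    by (cases "zc (s 0)") auto
  have "s 0 = []" using a b len_nz_zc[of "s 0"] by simp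
  then show ?thesis using subst_drop0[of s l] subst_drop0[of s r] assms(4) by simp
qed

lemma upt_no0: "0 \<notin> set [1..<m]" by simp
lemma f_rep: "0 \<notin> set xs \<Longrightarrow> filter (\<lambda>c. c \<noteq> 0) (replicate n (0::nat) @ xs) = xs"
  by (simp add: filter_replicate filter_id_conv) (metis gr0I)

lemma cl_concat: "0 \<notin> set xs \<Longrightarrow> count_list (concat (map (\<lambda>i. [i, 0::nat]) xs)) 0 = length xs"
  by (induct xs) auto
lemma f_concat: "0 \<notin> set xs \<Longrightarrow> filter (\<lambda>c. c \<noteq> 0) (concat (map (\<lambda>i. [i, 0::nat]) xs)) = xs"
  by (induct xs) auto
lemma cl_rep0: "count_list (replicate k (0::nat)) 0 = k" by (induct k) auto
lemma cl_no: "x \<notin> set xs \<Longrightarrow> count_list xs x = 0" by (induct xs) auto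

lemma A_eq:
  assumes "n \<ge> 3" "(l, r) = A_id n \<or> (r, l) = A_id n"
    "nz (subst s l) \<le> 1" "zc (subst s l) \<le> n - 1"
  shows "subst s l = subst s r"
proof -
  have c1: "count_list (fst (A_id n)) 0 = n" unfolding A_id_def
    by (simp add: cl_rep0 cl_no)
  have c2: "count_list (snd (A_id n)) 0 = n" unfolding A_id_def
    using cl_concat[OF upt_no0[of "n+1"]] by simp
  have f: "filter (\<lambda>c. c \<noteq> 0) (fst (A_id n)) = filter (\<lambda>c. c \<noteq> 0) (snd (A_id n))"
    unfolding A_id_def fst_conv snd_conv
    by (simp only: f_concat[OF upt_no0[of "n+1"]] f_rep[OF upt_no0[of "n+1"]])
  show ?thesis using assms(2)
  proof
    assume h: "(l, r) = A_id n"
    have hl: "l = fst (A_id n)" "r = snd (A_id n)" using h by (metis fst_conv, metis snd_conv)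
    show ?thesis by (rule gen_eq[of l n r]) (use hl c1 c2 f assms in auto)
  next
    assume h: "(r, l) = A_id n"
    have hl: "r = fst (A_id n)" "l = snd (A_id n)" using h by (metis fst_conv, metis snd_conv)
    show ?thesis by (rule gen_eq[of l n r]) (use hl c1 c2 f assms in auto)
  qed
qed

lemma key:
  assumes n: "n \<ge> 3" and eq: "equiv (B n) \<pi>" and aB: "a \<in> B n"
    and a: "a = p @ subst s l @ q"
    and lr: "(l, r) \<in> A_pi_ids n \<pi> \<or> (r, l) \<in> A_pi_ids n \<pi>"
  shows "p @ subst s r @ q \<in> B n \<and> (a, p @ subst s r @ q) \<in> \<pi>"
proof -
  define w where "w = subst s l"
  have Pa: "length a = n \<and> zc a = n - 1 \<and> nz a = 1 \<and> set a \<subseteq> {0,1}"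
    using B_props[OF aB] n by auto
  have wz: "nz w \<le> 1" "zc w \<le> n - 1" "set w \<subseteq> {0,1}"
    using Pa a unfolding w_def nz_def zc_def by auto
  have refl: "(a, a) \<in> \<pi>" using eq aB unfolding equiv_def by (meson refl_onD)
  have piB: "\<And>x y. (x, y) \<in> \<pi> \<Longrightarrow> x \<in> B n \<and> y \<in> B n"
    using eq unfolding equiv_def refl_on_def by blast
  have symp: "\<And>x y. (x, y) \<in> \<pi> \<Longrightarrow> (y, x) \<in> \<pi>"
    using eq unfolding equiv_def by (meson symD)
  show ?thesis
  proof (cases "subst s l = subst s r")
    case True
    then show ?thesis using aB refl a by simp
  next
    case False
    have lrpi: "(l, r) \<in> \<pi> \<or> (r, l) \<in> \<pi>"
    proof (rule ccontr)
      assume nn: "\<not> ?thesis"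
      then have "(l, r) \<in> O_ids \<or> (r, l) \<in> O_ids \<or> (l, r) = A_id n \<or> (r, l) = A_id n"
        using lr unfolding A_pi_ids_def by auto
      moreover have "(l, r) = A_id n \<or> (r, l) = A_id n \<Longrightarrow> False"
        using A_eq[OF n _ wz(1)[unfolded w_def] wz(2)[unfolded w_def]] False by blast
      moreover have "(l, r) \<in> O_ids \<or> (r, l) \<in> O_ids \<Longrightarrow> False"
      proof -
        assume o: "(l, r) \<in> O_ids \<or> (r, l) \<in> O_ids"
        have cl: "count_list l 0 = 2 \<and> count_list l 1 = 2"
          using o unfolding O_ids_def by auto
        have "2 * nz (s 0) \<le> 1" using lower[where P="\<lambda>c. c \<noteq> 0" and s=s and w=l and c=0] wz(1) cl unfolding nz_def w_def by simp
        moreover have "2 * nz (s 1) \<le> 1" using lower[where P="\<lambda>c. c \<noteq> 0" and s=s and w=l and c=1] wz(1) cl unfolding nz_def w_def by simp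
        ultimately have "nz (s 0) = 0" "nz (s 1) = 0" by auto
        then show False using O_eq o False by blast
      qed
      ultimately show False by blast
    qed
    then have lB: "l \<in> B n" and rB: "r \<in> B n" using piB by blast+
    have n1: "n \<ge> 1" using n by simp
    have sl: "nz w = (n - 1) * nz (s 0) + nz (s 1)" "zc w = (n - 1) * zc (s 0) + zc (s 1)"
      using subst_B[OF lB n1, of s] unfolding w_def by auto
    have nn2: "n - 1 \<ge> 2" using n by simp
    have nzs0: "nz (s 0) = 0"
    proof (rule ccontr)
      assume "nz (s 0) \<noteq> 0"
      then have "(n - 1) * nz (s 0) \<ge> 2" using nn2
        by (cases "nz (s 0)") auto
      then show False using sl wz by simp
    qed
    have zcs0: "zc (s 0) \<le> 1"
    proof (rule ccontr)
      assume "\<not> zc (s 0) \<le> 1"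
      then have "(n - 1) * 2 \<le> (n - 1) * zc (s 0)" by simp
      then show False using sl wz nn2 by linarith
    qed
    show ?thesis
    proof (cases "zc (s 0) = 0")
      case True
      then have s0: "s 0 = []" using nzs0 len_nz_zc[of "s 0"] by simp
      have "subst s l = s 1" using subst_drop0[of s l, OF s0] B_props[OF lB n1] by simp
      moreover have "subst s r = s 1" using subst_drop0[of s r, OF s0] B_props[OF rB n1] by simp
      ultimately show ?thesis using False by simp
    next
      case zF: False
      then have z1: "zc (s 0) = 1" using zcs0 by simp
      have s0: "s 0 = [0]" using nz0[OF nzs0] len_nz_zc[of "s 0"] nzs0 z1 by simp
      have zs1: "zc (s 1) = 0" using sl wz z1 by simp
      have nzs1: "nz (s 1) \<le> 1" using sl wz by simp
      have ls1: "length (s 1) \<le> 1" using len_nz_zc[of "s 1"] zs1 nzs1 by simp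
      show ?thesis
      proof (cases "s 1")
        case Nil
        then have "subst s l = subst s r" using subst_B_const[where s=s, OF lB n1 s0 Nil] subst_B_const[where s=s, OF rB n1 s0 Nil] by simp
        then show ?thesis using False by simp
      next
        case (Cons c rest)
        then have rest: "rest = []" using ls1 by simp
        have "c \<noteq> 0" using zs1 Cons unfolding zc_def by (simp split: if_splits)
        moreover have "c \<in> set w" unfolding w_def using subst_B[OF lB n1] B_form[OF lB] Cons
          by (auto simp: B_def)
        ultimately have "c = 1" using wz(3) by auto
        then have s1: "s 1 = [1]" using Cons rest by simp
        have el: "subst s l = l" using subst_id01[OF _ s0 s1] B_props[OF lB n1] by simp
        have er: "subst s r = r" using subst_id01[OF _ s0 s1] B_props[OF rB n1] by simp
        have "length l = n" using B_props[OF lB n1] by simp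
        then have "p = [] \<and> q = []" using Pa a el by simp
        then have "a = l" "p @ subst s r @ q = r" using a el er by auto
        then show ?thesis using rB lrpi symp by auto
      qed
    qed
  qed
qed

theorem lemma3p3:
  fixes n :: nat and \<pi> :: "(word \<times> word) set" and u v :: word
  assumes "n \<ge> 3"
    and "equiv (B n) \<pi>"
    and "satisfies (A_pi_ids n \<pi>) (u, v)"
    and "u \<in> B n"
  shows "v \<in> B n \<and> (u, v) \<in> \<pi>"
proof -
  have st: "(step (A_pi_ids n \<pi>))\<^sup>*\<^sup>* u v"
    using assms(3) deriv_steps unfolding satisfies_def by simp
  have refl: "(u, u) \<in> \<pi>" using assms(2,4) unfolding equiv_def by (meson refl_onD)
  have tr: "trans \<pi>" using assms(2) unfolding equiv_def by blast
  from st show ?thesis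
  proof (induction rule: rtranclp_induct)
    case base then show ?case using assms(4) refl by simp
  next
    case (step y z)
    then obtain p q s l r where h: "(l, r) \<in> A_pi_ids n \<pi> \<or> (r, l) \<in> A_pi_ids n \<pi>"
      "y = p @ subst s l @ q" "z = p @ subst s r @ q" unfolding step_def by blast
    have "z \<in> B n \<and> (y, z) \<in> \<pi>" using key[OF assms(1,2) _ h(2) h(1)] step.IH h(3) by simp
    then show ?case using step.IH tr by (meson transD)
  qed
qed

end
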